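(* Let $I$ be a compact non-degenerate interval and let $f:I\to\mathbb{R}$ be continuous. If the graph $\{(x,f(x)):x\in I\}\subseteq\mathbb{R}^2$ is $1$-monotone, then $f$ is of bounded variation.
   Context: A metric space $(X,d)$ is $c$-monotone ($c>0$) if there is a linear order $<$ on $X$ such that $d(x,y)\le c\,d(x,z)$ whenever $x<y<z$ in $X$. The graph carries the Euclidean metric of $\mathbb{R}^2$. *)

theory Defs
  imports "HOL-Analysis.Analysis"
begin

definition strict_linear_order_on :: "'a set \<Rightarrow> ('a \<Rightarrow> 'a \<Rightarrow> bool) \<Rightarrow> bool" where
  "strict_linear_order_on X R \<longleftrightarrow>
     (\<forall>x\<in>X. \<not> R x x) \<and>
     (\<forall>x\<in>X. \<forall>y\<in>X. \<forall>z\<in>X. R x y \<and> R y z \<longrightarrow> R x z) \<and>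
     (\<forall>x\<in>X. \<forall>y\<in>X. x \<noteq> y \<longrightarrow> R x y \<or> R y x)"

definition c_monotone :: "real \<Rightarrow> 'a::metric_space set \<Rightarrow> bool" where
  "c_monotone c X \<longleftrightarrow>
     (\<exists>R. strict_linear_order_on X R \<and>
        (\<forall>x\<in>X. \<forall>y\<in>X. \<forall>z\<in>X. R x y \<and> R y z \<longrightarrow> dist x y \<le> c * dist x z))"

definition bounded_variation_on :: "(real \<Rightarrow> real) \<Rightarrow> real \<Rightarrow> real \<Rightarrow> bool" where
  "bounded_variation_on f a b \<longleftrightarrow>
     (\<exists>M. \<forall>n. \<forall>t :: nat \<Rightarrow> real.
        t 0 = a \<and> t n = b \<and> (\<forall>i<n. t i < t (Suc i)) \<longrightarrow>
        (\<Sum>i<n. \<bar>f (t (Suc i)) - f (t i)\<bar>) \<le> M)"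

text \<open>Graph of f over I as a subset of the Euclidean plane; real \<times> real carries
dist ((x1,y1),(x2,y2)) = sqrt((x1-x2)^2 + (y1-y2)^2), the Euclidean metric.\<close>

definition graph_on :: "real set \<Rightarrow> (real \<Rightarrow> real) \<Rightarrow> (real \<times> real) set" where
  "graph_on I f = {(x, f x) | x. x \<in> I}"

end

theory Submission
  imports Defs
begin


lemma key_ineq:
  fixes L al D de :: real
  assumes "L \<ge> 0" "de > 0" "D > de"
    and "L^2 + al^2 \<le> (L+de)^2 + (al - D)^2"
  shows "al - L \<le> D/2 + de"
proof (rule ccontr)
  assume "\<not> ?thesis"
  hence h: "2*al - D > 2*L + 2*de" by simp
  have e: "2*al*D - D^2 \<le> 2*L*de + de^2" using assms(4) by (simp add: power2_eq_square algebra_simps)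
  have "D*(2*al - D) \<ge> D*(2*L+2*de)" using h assms by (intro mult_left_mono) auto
  moreover have "D*(2*L+2*de) \<ge> de*(2*L+2*de)" using assms by (intro mult_right_mono) auto
  ultimately have "2*al*D - D^2 \<ge> de*(2*L+2*de)" by (simp add: algebra_simps power2_eq_square)
  moreover have "de*de > 0" using assms by simp
  ultimately show False using e by (simp add: algebra_simps power2_eq_square)
qed

lemma part_mono:
  fixes t :: "nat \<Rightarrow> real"
  assumes "\<forall>i<n. t i < t (Suc i)" "i \<le> j" "j \<le> n"
  shows "t i \<le> t j"
  using assms(2,3)
proof (induction j)
  case 0 thus ?case by simp
next
  case (Suc j)
  show ?case
  proof (cases "i = Suc j")
    case False
    hence "t i \<le> t j" using Suc by simp
    also have "t j \<le> t (Suc j)" using assms(1) Suc.prems by (simp add: less_imp_le)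
    finally show ?thesis .
  qed simp
qed

lemma var_forward:
  fixes f :: "real \<Rightarrow> real" and t :: "nat \<Rightarrow> real"
  assumes F: "\<And>s t u. a \<le> s \<Longrightarrow> s < t \<Longrightarrow> t < u \<Longrightarrow> u \<le> b \<Longrightarrow>
        (t-s)^2 + (f t - f s)^2 \<le> (u-s)^2 + (f u - f s)^2"
    and B: "\<And>x. a \<le> x \<Longrightarrow> x \<le> b \<Longrightarrow> \<bar>f x\<bar> \<le> B"
    and t0: "t 0 = a" and tn: "t n = b" and inc: "\<forall>i<n. t i < t (Suc i)"
  shows "(\<Sum>i<n. \<bar>f (t (Suc i)) - f (t i)\<bar>) \<le> 10*B + 6*(b-a)"
proof -
  have tab: "a \<le> t i \<and> t i \<le> b" if "i \<le> n" for i
    using part_mono[OF inc, of 0 i] part_mono[OF inc, of i n] that t0 tn by auto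
  have ab: "a \<le> b" using tab[of n] tn by simp
  define h where "h x = f x - x" for x
  define m where "m x = Inf (h ` {a..x})" for x
  have bdd: "bdd_below (h ` {a..x})" if "x \<le> b" for x
  proof
    fix y assume "y \<in> h ` {a..x}"
    then obtain z where "z \<in> {a..x}" "y = h z" by auto
    thus "- B - b \<le> y" using B[of z] that by (auto simp: h_def)
  qed
  have mlow: "m x \<le> h y" if "x \<le> b" "a \<le> y" "y \<le> x" for x y
    unfolding m_def using that bdd[of x] by (intro cInf_lower) auto
  have mgr: "m x \<ge> c" if "a \<le> x" "\<And>y. a \<le> y \<Longrightarrow> y \<le> x \<Longrightarrow> c \<le> h y" for x c
    unfolding m_def using that by (intro cInf_greatest) auto
  have mmono: "m y \<le> m x" if "a \<le> x" "x \<le> y" "y \<le> b" for x y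
    unfolding m_def using that bdd[of y] by (intro cInf_superset_mono) auto
  have ma: "m a = h a" unfolding m_def by simp
  have mb: "m b \<ge> - B - b"
  proof (rule mgr)
    fix y assume "a \<le> y" "y \<le> b"
    thus "- B - b \<le> h y" using B[of y] by (auto simp: h_def)
  qed (use ab in auto)
  have step: "max 0 (f (t i) - f (t (Suc i))) \<le> (t (Suc i) - t i) + 2*(m (t i) - m (t (Suc i)))"
    if i: "i < n" for i
  proof -
    define x y where "x = t i" and "y = t (Suc i)"
    have xy: "a \<le> x" "x < y" "y \<le> b" using tab[of i] tab[of "Suc i"] inc i by (auto simp: x_def y_def)
    define D where "D = f x - f y"
    show ?thesis
    proof (cases "D \<le> y - x")
      case True
      thus ?thesis using mmono[of x y] xy by (simp add: x_def[symmetric] y_def[symmetric] D_def)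
    next
      case False
      have hy: "h y \<le> h s - D/2" if s: "a \<le> s" "s \<le> x" for s
      proof (cases "s = x")
        case True thus ?thesis using False xy unfolding h_def D_def by (simp add: field_simps)
      next
        case ne: False
        have "(x-s)^2 + (f x - f s)^2 \<le> (y-s)^2 + (f y - f s)^2" using F[of s x y] s ne xy by auto
        hence "(x-s)^2 + (f x - f s)^2 \<le> ((x-s)+(y-x))^2 + ((f x - f s) - D)^2"
          by (simp add: D_def algebra_simps)
        hence "(f x - f s) - (x - s) \<le> D/2 + (y-x)"
          using False xy s by (intro key_ineq) auto
        thus ?thesis by (simp add: h_def D_def field_simps)
      qed
      have "m x \<ge> h y + D/2" using xy by (intro mgr) (use hy in force)+
      moreover have "m y \<le> h y" using mlow[of y y] xy by auto
      ultimately show ?thesis using False xy unfolding x_def[symmetric] y_def[symmetric] D_def[symmetric] by (simp add: field_simps)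
    qed
  qed
  have abs_eq: "\<bar>f (t (Suc i)) - f (t i)\<bar> = (f (t (Suc i)) - f (t i)) + 2 * max 0 (f (t i) - f (t (Suc i)))" for i
    by (simp add: abs_if max_def)
  have "(\<Sum>i<n. \<bar>f (t (Suc i)) - f (t i)\<bar>) = (\<Sum>i<n. f (t (Suc i)) - f (t i)) + 2 * (\<Sum>i<n. max 0 (f (t i) - f (t (Suc i))))"
    by (simp add: abs_eq sum.distrib sum_distrib_left)
  also have "(\<Sum>i<n. f (t (Suc i)) - f (t i)) = f b - f a"
    using sum_lessThan_telescope[of "\<lambda>i. f (t i)" n] t0 tn by simp
  also have "(\<Sum>i<n. max 0 (f (t i) - f (t (Suc i)))) \<le> (\<Sum>i<n. (t (Suc i) - t i) + 2*(m (t i) - m (t (Suc i))))"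
    using step by (intro sum_mono) auto
  also have "\<dots> = (b - a) + 2 * (m a - m b)"
    using sum_lessThan_telescope[of t n] sum_lessThan_telescope'[of "\<lambda>i. m (t i)" n] t0 tn
    by (simp only: sum.distrib sum_distrib_left[symmetric])
  finally have "(\<Sum>i<n. \<bar>f (t (Suc i)) - f (t i)\<bar>) \<le> f b - f a + 2 * ((b - a) + 2 * (m a - m b))"
    by simp
  moreover have "\<bar>f a\<bar> \<le> B" "\<bar>f b\<bar> \<le> B" using B ab by auto
  ultimately show ?thesis using ma mb by (simp add: h_def)
qed


locale ordset =
  fixes a b :: real and f :: "real \<Rightarrow> real" and r :: "real \<Rightarrow> real \<Rightarrow> bool"
  assumes cont: "continuous_on {a..b} f"
   and irr: "\<And>x. x\<in>{a..b} \<Longrightarrow> \<not> r x x"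
   and tr: "\<And>x y z. x\<in>{a..b} \<Longrightarrow> y\<in>{a..b} \<Longrightarrow> z\<in>{a..b} \<Longrightarrow> r x y \<Longrightarrow> r y z \<Longrightarrow> r x z"
   and tot: "\<And>x y. x\<in>{a..b} \<Longrightarrow> y\<in>{a..b} \<Longrightarrow> x \<noteq> y \<Longrightarrow> r x y \<or> r y x"
   and mon: "\<And>x y z. x\<in>{a..b} \<Longrightarrow> y\<in>{a..b} \<Longrightarrow> z\<in>{a..b} \<Longrightarrow> r x y \<Longrightarrow> r y z \<Longrightarrow>
        dist (x, f x) (y, f y) \<le> dist (x, f x) (z, f z)"
begin

lemma asym: "x\<in>{a..b} \<Longrightarrow> y\<in>{a..b} \<Longrightarrow> r x y \<Longrightarrow> \<not> r y x"
  using tr irr by blast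

lemma local_side:
  assumes v: "v \<in> {a..b}" and x: "x \<in> {a..b}" and ne: "x \<noteq> v"
  shows "\<exists>e>0. \<forall>x'\<in>{a..b}. dist x' x < e \<longrightarrow> (r v x \<longrightarrow> r v x') \<and> (r x v \<longrightarrow> r x' v)"
proof -
  define p where "p z = (z, f z)" for z
  have pc: "continuous_on {a..b} p" unfolding p_def by (intro continuous_intros cont)
  define d where "d = dist (p v) (p x)"
  have dpos: "d > 0" using ne by (simp add: d_def p_def)
  obtain e where e: "e > 0" "\<forall>x'\<in>{a..b}. dist x' x < e \<longrightarrow> dist (p x') (p x) < d/2"
    using pc x dpos unfolding continuous_on_iff by (metis half_gt_zero)
  show ?thesis
  proof (intro exI[of _ e] conjI ballI impI e(1))
    fix x' assume x': "x' \<in> {a..b}" "dist x' x < e"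
    have cl: "dist (p x') (p x) < d/2" using e x' by auto
    have tri: "d \<le> dist (p v) (p x') + dist (p x') (p x)" unfolding d_def by (rule dist_triangle)
    have ne': "x' \<noteq> v" using cl dpos d_def by auto
    { assume rvx: "r v x"
      show "r v x'"
      proof (rule ccontr)
        assume "\<not> r v x'"
        hence "r x' v" using tot[OF v x'(1)] ne' by auto
        hence "dist (p x') (p v) \<le> dist (p x') (p x)" using mon[OF x'(1) v x] rvx by (simp add: p_def)
        thus False using cl tri by (simp add: dist_commute)
      qed }
    { assume rxv: "r x v"
      show "r x' v"
      proof (rule ccontr)
        assume "\<not> r x' v"
        hence "r v x'" using tot[OF v x'(1)] ne' by auto
        hence "dist (p x) (p v) \<le> dist (p x) (p x')" using mon[OF x v x'(1)] rxv by (simp add: p_def)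
        thus False using cl d_def dpos by (simp add: dist_commute)
      qed }
  qed
qed

lemma same_side:
  assumes v: "v \<in> {a..b}" and x: "x \<in> {a..b}" and y: "y \<in> {a..b}"
    and side: "(x < v \<and> y < v) \<or> (v < x \<and> v < y)" and rvx: "r v x"
  shows "r v y"
proof (rule ccontr)
  assume nry: "\<not> r v y"
  define T where "T = {min x y..max x y}"
  define A where "A = {z. \<exists>e>0. \<forall>x'\<in>{a..b}. dist x' z < e \<longrightarrow> r v x'}"
  define B where "B = {z. \<exists>e>0. \<forall>x'\<in>{a..b}. dist x' z < e \<longrightarrow> r x' v}"
  have openA: "open A" unfolding open_dist
  proof
    fix z assume "z \<in> A"
    then obtain e where e: "e > 0" "\<forall>x'\<in>{a..b}. dist x' z < e \<longrightarrow> r v x'" unfolding A_def by auto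
    show "\<exists>e>0. \<forall>y. dist y z < e \<longrightarrow> y \<in> A"
    proof (intro exI[of _ e] conjI allI impI e(1))
      fix w assume w: "dist w z < e"
      show "w \<in> A" unfolding A_def
      proof (intro CollectI exI[of _ "e - dist w z"] conjI ballI impI)
        show "e - dist w z > 0" using w by simp
        fix x' assume "x' \<in> {a..b}" "dist x' w < e - dist w z"
        moreover have "dist x' z \<le> dist x' w + dist w z" by (rule dist_triangle)
        ultimately show "r v x'" using e by auto
      qed
    qed
  qed
  have openB: "open B" unfolding open_dist
  proof
    fix z assume "z \<in> B"
    then obtain e where e: "e > 0" "\<forall>x'\<in>{a..b}. dist x' z < e \<longrightarrow> r x' v" unfolding B_def by auto
    show "\<exists>e>0. \<forall>y. dist y z < e \<longrightarrow> y \<in> B"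
    proof (intro exI[of _ e] conjI allI impI e(1))
      fix w assume w: "dist w z < e"
      show "w \<in> B" unfolding B_def
      proof (intro CollectI exI[of _ "e - dist w z"] conjI ballI impI)
        show "e - dist w z > 0" using w by simp
        fix x' assume "x' \<in> {a..b}" "dist x' w < e - dist w z"
        moreover have "dist x' z \<le> dist x' w + dist w z" by (rule dist_triangle)
        ultimately show "r x' v" using e by auto
      qed
    qed
  qed
  have Tsub: "T \<subseteq> {a..b} - {v}" using x y side by (auto simp: T_def)
  have cover: "T \<subseteq> A \<union> B"
  proof
    fix z assume "z \<in> T"
    hence z: "z \<in> {a..b}" "z \<noteq> v" using Tsub by auto
    obtain e where e: "e > 0" "\<forall>x'\<in>{a..b}. dist x' z < e \<longrightarrow> (r v z \<longrightarrow> r v x') \<and> (r z v \<longrightarrow> r x' v)"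
      using local_side[OF v z(1) z(2)] by auto
    show "z \<in> A \<union> B"
    proof (cases "r v z")
      case True thus ?thesis using e unfolding A_def by blast
    next
      case False hence "r z v" using tot[OF v z(1)] z(2) by auto
      thus ?thesis using e unfolding B_def by blast
    qed
  qed
  have disj: "A \<inter> B \<inter> T = {}"
  proof (rule ccontr)
    assume "A \<inter> B \<inter> T \<noteq> {}"
    then obtain z where z: "z \<in> A" "z \<in> B" "z \<in> T" by auto
    hence zab: "z \<in> {a..b}" using Tsub by auto
    from z(1) have "r v z" unfolding A_def using zab by force
    moreover from z(2) have "r z v" unfolding B_def using zab by force
    ultimately show False using asym v zab by blast
  qed
  have "x \<in> A"
  proof -
    have "x \<noteq> v" using side by auto
    then obtain e where "e > 0" "\<forall>x'\<in>{a..b}. dist x' x < e \<longrightarrow> (r v x \<longrightarrow> r v x') \<and> (r x v \<longrightarrow> r x' v)"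
      using local_side[OF v x] by auto
    thus ?thesis using rvx unfolding A_def by blast
  qed
  moreover have "x \<in> T" "y \<in> T" by (auto simp: T_def)
  moreover have "y \<in> B"
  proof -
    have "y \<noteq> v" using side by auto
    hence "r y v" using tot[OF v y] nry by auto
    moreover obtain e where "e > 0" "\<forall>x'\<in>{a..b}. dist x' y < e \<longrightarrow> (r v y \<longrightarrow> r v x') \<and> (r y v \<longrightarrow> r x' v)"
      using local_side[OF v y] \<open>y \<noteq> v\<close> by auto
    ultimately show ?thesis unfolding B_def by blast
  qed
  ultimately show False
    using connectedD[OF connected_Icc openA openB disj[unfolded T_def] cover[unfolded T_def]]
    unfolding T_def by blast
qed

lemma order_dir:
  assumes ab: "a < b"
  shows "(\<forall>x y. a \<le> x \<longrightarrow> x < y \<longrightarrow> y \<le> b \<longrightarrow> r x y) \<or> (\<forall>x y. a \<le> x \<longrightarrow> x < y \<longrightarrow> y \<le> b \<longrightarrow> r y x)"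
proof (cases "r a b")
  case True
  have ra: "r a x" if "a < x" "x \<le> b" for x
    using same_side[of a b x] True that ab by auto
  have "r x y" if xy: "a \<le> x" "x < y" "y \<le> b" for x y
  proof (cases "x = a")
    case True thus ?thesis using ra xy by auto
  next
    case False
    hence ax: "a < x" using xy by auto
    show ?thesis
    proof (rule ccontr)
      assume "\<not> r x y"
      hence "r y x" using tot[of x y] xy by auto
      hence "r y a" using same_side[of y x a] xy ax by auto
      moreover have "r a y" using ra xy ax by auto
      ultimately show False using asym[of a y] xy ax by auto
    qed
  qed
  thus ?thesis by blast
next
  case False
  have ra: "r x a" if "a < x" "x \<le> b" for x
  proof -
    have "\<not> r a x" using same_side[of a x b] False that ab by auto
    thus ?thesis using tot[of a x] that by auto
  qed
  have "r y x" if xy: "a \<le> x" "x < y" "y \<le> b" for x y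
  proof (cases "x = a")
    case True thus ?thesis using ra xy by auto
  next
    case False
    hence ax: "a < x" using xy by auto
    show ?thesis
    proof (rule ccontr)
      assume "\<not> r y x"
      hence "\<not> r y a" using same_side[of y a x] xy ax by auto
      moreover have "r y a" using ra xy ax by auto
      ultimately show False by auto
    qed
  qed
  thus ?thesis by blast
qed

end


lemma dist_sq: "dist ((s::real), (fs::real)) (t, ft) \<le> dist (s, fs) (u, fu) \<Longrightarrow>
   (t-s)^2 + (ft - fs)^2 \<le> (u-s)^2 + (fu - fs)^2"
  by (simp add: dist_Pair_Pair dist_real_def power2_commute)

theorem theorem6p5:
  fixes a b :: real and f :: "real \<Rightarrow> real"
  assumes "a < b"
    and "continuous_on {a..b} f"
    and "c_monotone 1 (graph_on {a..b} f)"
  shows "bounded_variation_on f a b"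
proof -
  obtain R where so: "strict_linear_order_on (graph_on {a..b} f) R"
    and dm: "\<forall>x\<in>graph_on {a..b} f. \<forall>y\<in>graph_on {a..b} f. \<forall>z\<in>graph_on {a..b} f.
              R x y \<and> R y z \<longrightarrow> dist x y \<le> 1 * dist x z"
    using assms(3) unfolding c_monotone_def by blast
  have so1: "\<And>x. x \<in> graph_on {a..b} f \<Longrightarrow> \<not> R x x"
    and so2: "\<And>x y z. x \<in> graph_on {a..b} f \<Longrightarrow> y \<in> graph_on {a..b} f \<Longrightarrow> z \<in> graph_on {a..b} f \<Longrightarrow> R x y \<Longrightarrow> R y z \<Longrightarrow> R x z"
    and so3: "\<And>x y. x \<in> graph_on {a..b} f \<Longrightarrow> y \<in> graph_on {a..b} f \<Longrightarrow> x \<noteq> y \<Longrightarrow> R x y \<or> R y x"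
    using so unfolding strict_linear_order_on_def by blast+
  define r where "r x y = R (x, f x) (y, f y)" for x y
  have G: "(x, f x) \<in> graph_on {a..b} f" if "x \<in> {a..b}" for x
    using that unfolding graph_on_def by blast
  interpret ordset a b f r
  proof
    show "continuous_on {a..b} f" by fact
  next
    fix x assume "x \<in> {a..b}" thus "\<not> r x x" unfolding r_def by (intro so1 G)
  next
    fix x y z assume "x \<in> {a..b}" "y \<in> {a..b}" "z \<in> {a..b}" "r x y" "r y z"
    thus "r x z" unfolding r_def by (metis so2 G)
  next
    fix x y assume "x \<in> {a..b}" "y \<in> {a..b}" "x \<noteq> y"
    hence "(x, f x) \<noteq> (y, f y)" "(x, f x) \<in> graph_on {a..b} f" "(y, f y) \<in> graph_on {a..b} f" using G by auto
    thus "r x y \<or> r y x" unfolding r_def using so3 by blast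
  next
    fix x y z assume "x \<in> {a..b}" "y \<in> {a..b}" "z \<in> {a..b}" "r x y" "r y z"
    hence "(x, f x) \<in> graph_on {a..b} f" "(y, f y) \<in> graph_on {a..b} f" "(z, f z) \<in> graph_on {a..b} f"
      "R (x, f x) (y, f y)" "R (y, f y) (z, f z)" using G unfolding r_def by auto
    thus "dist (x, f x) (y, f y) \<le> dist (x, f x) (z, f z)" using dm by simp
  qed
  obtain B where B: "\<And>x. a \<le> x \<Longrightarrow> x \<le> b \<Longrightarrow> \<bar>f x\<bar> \<le> B"
  proof -
    have "compact (f ` {a..b})" by (rule compact_continuous_image[OF assms(2) compact_Icc])
    hence "bounded (f ` {a..b})" by (rule compact_imp_bounded)
    then obtain B where B0: "\<forall>y\<in>f ` {a..b}. \<bar>y\<bar> \<le> B" unfolding bounded_real by blast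
    have "\<bar>f x\<bar> \<le> B" if "a \<le> x" "x \<le> b" for x using B0 that by simp
    thus ?thesis by (rule that)
  qed
  have mon': "dist (x, f x) (y, f y) \<le> dist (x, f x) (z, f z)"
    if "x \<in> {a..b}" "y \<in> {a..b}" "z \<in> {a..b}" "r x y" "r y z" for x y z
    by (rule mon[OF that])
  from order_dir[OF assms(1)] show ?thesis
  proof
    assume fw: "\<forall>x y. a \<le> x \<longrightarrow> x < y \<longrightarrow> y \<le> b \<longrightarrow> r x y"
    have F: "(t-s)^2 + (f t - f s)^2 \<le> (u-s)^2 + (f u - f s)^2"
      if "a \<le> s" "s < t" "t < u" "u \<le> b" for s t u
    proof (rule dist_sq, rule mon')
      show "r s t" "r t u" using that fw by auto
    qed (use that in auto)
    show ?thesis unfolding bounded_variation_on_def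
    proof (intro exI allI impI)
      fix n and t :: "nat \<Rightarrow> real"
      assume tt: "t 0 = a \<and> t n = b \<and> (\<forall>i<n. t i < t (Suc i))"
      show "(\<Sum>i<n. \<bar>f (t (Suc i)) - f (t i)\<bar>) \<le> 10*B + 6*(b-a)"
        using tt by (intro var_forward[OF F B]) auto
    qed
  next
    assume bw: "\<forall>x y. a \<le> x \<longrightarrow> x < y \<longrightarrow> y \<le> b \<longrightarrow> r y x"
    define g where "g x = f (- x)" for x
    have F: "(t-s)^2 + (g t - g s)^2 \<le> (u-s)^2 + (g u - g s)^2"
      if "-b \<le> s" "s < t" "t < u" "u \<le> -a" for s t u
    proof -
      have "dist (-s, f (-s)) (-t, f (-t)) \<le> dist (-s, f (-s)) (-u, f (-u))"
      proof (rule mon')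
        show "r (-s) (-t)" "r (-t) (-u)" using that bw by auto
      qed (use that in auto)
      hence "(-t - -s)^2 + (f (-t) - f (-s))^2 \<le> (-u - -s)^2 + (f (-u) - f (-s))^2"
        by (rule dist_sq)
      moreover have "(-t - -s)^2 = (t-s)^2" "(-u - -s)^2 = (u-s)^2"
        by (simp_all add: power2_eq_square algebra_simps)
      ultimately show ?thesis unfolding g_def by simp
    qed
    have Bg: "\<bar>g x\<bar> \<le> B" if "-b \<le> x" "x \<le> -a" for x using B[of "-x"] that by (simp add: g_def)
    show ?thesis unfolding bounded_variation_on_def
    proof (intro exI allI impI)
      fix n and t :: "nat \<Rightarrow> real"
      assume tt: "t 0 = a \<and> t n = b \<and> (\<forall>i<n. t i < t (Suc i))"
      define t' where "t' i = - t (n - i)" for i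
      have t'0: "t' 0 = -b" and t'n: "t' n = -a" using tt by (auto simp: t'_def)
      have inc: "\<forall>i<n. t' i < t' (Suc i)"
      proof (intro allI impI)
        fix i assume "i < n"
        hence "n - i = Suc (n - Suc i)" by simp
        thus "t' i < t' (Suc i)" using tt \<open>i < n\<close> by (auto simp: t'_def)
      qed
      have "(\<Sum>i<n. \<bar>g (t' (Suc i)) - g (t' i)\<bar>) \<le> 10*B + 6*(-a - -b)"
        by (rule var_forward[OF F Bg t'0 t'n inc])
      moreover have "(\<Sum>i<n. \<bar>g (t' (Suc i)) - g (t' i)\<bar>) = (\<Sum>i<n. \<bar>f (t (Suc i)) - f (t i)\<bar>)"
      proof -
        have "(\<Sum>i<n. \<bar>g (t' (Suc i)) - g (t' i)\<bar>) = (\<Sum>i<n. (\<lambda>j. \<bar>f (t (Suc j)) - f (t j)\<bar>) (n - Suc i))"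
        proof (rule sum.cong[OF refl])
          fix i assume "i \<in> {..<n}"
          hence "n - i = Suc (n - Suc i)" by simp
          thus "\<bar>g (t' (Suc i)) - g (t' i)\<bar> = (\<lambda>j. \<bar>f (t (Suc j)) - f (t j)\<bar>) (n - Suc i)"
            by (simp add: g_def t'_def abs_minus_commute)
        qed
        also have "\<dots> = (\<Sum>i<n. \<bar>f (t (Suc i)) - f (t i)\<bar>)" by (rule sum.nat_diff_reindex)
        finally show ?thesis .
      qed
      ultimately show "(\<Sum>i<n. \<bar>f (t (Suc i)) - f (t i)\<bar>) \<le> 10*B + 6*(b-a)" by simp
    qed
  qed
qed

end
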